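(* Let $R_3,R_2,R_1$ be three runs that lie consecutively in $\{1,\dots,n\}$ in this left-to-right order, with no gaps between them. Let $p_3=P(R_3,R_2)$ and $p_2=P(R_2,R_1)$, and suppose $p_3>p_2$. Then $\mathrm{mid}(R_1)-\mathrm{mid}(R_3)\ge n/2^{p_3+1}$.
   Context: Assume $n=2^a-1$ for an integer $a\ge1$. Each index $j\in\{1,\dots,n\}$ has power $\mathrm{pow}(j)=a-1-\nu_2(j)$, where $\nu_2(j)$ is the exponent of $2$ in $j$. Equivalently, $\mathrm{pow}(j)$ is the depth of node $j$ in the perfect binary tree on $\{1,\dots,n\}$ in in-order, so the center has power $0$. A run is a nonempty set of consecutive indices $\{s,\dots,e\}$, and its midpoint is $\mathrm{mid}=(s+e)/2$. For a run $R$ and the run $R'$ immediately to its right, the power of $R$ (relative to $R'$) is $P(R,R')=\min\{\mathrm{pow}(j): j\in\mathbb{Z},\ \mathrm{mid}(R)\le j\le \mathrm{mid}(R')\}$. *)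

theory Defs
  imports Complex_Main "HOL-Computational_Algebra.Primes"
begin

definition nu2 :: "int \<Rightarrow> nat" where
  "nu2 j = multiplicity (2::int) j"

(* power of index j for n = 2^a - 1 *)
definition pow :: "nat \<Rightarrow> int \<Rightarrow> int" where
  "pow a j = int a - 1 - int (nu2 j)"

(* a run {s..e} is represented by its endpoints; midpoint (s+e)/2 *)
definition mid :: "int \<Rightarrow> int \<Rightarrow> real" where
  "mid s e = (real_of_int s + real_of_int e) / 2"

(* power of run {s..e} relative to the run {s'..e'} immediately to its right *)
definition runP :: "nat \<Rightarrow> int \<times> int \<Rightarrow> int \<times> int \<Rightarrow> int" where
  "runP a R R' = Min {pow a j | j. mid (fst R) (snd R) \<le> real_of_int j \<and>
                                   real_of_int j \<le> mid (fst R') (snd R')}"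

end

theory Submission
  imports Defs
begin

lemma runP_facts:
  fixes lo hi :: int
  assumes sub: "\<And>j. mid s e \<le> real_of_int j \<Longrightarrow> real_of_int j \<le> mid s' e' \<Longrightarrow> lo \<le> j \<and> j \<le> hi"
    and w: "mid s e \<le> real_of_int w" "real_of_int w \<le> mid s' e'"
  shows "\<exists>j. mid s e \<le> real_of_int j \<and> real_of_int j \<le> mid s' e' \<and> runP a (s, e) (s', e') = pow a j"
proof -
  let ?J = "{j. mid s e \<le> real_of_int j \<and> real_of_int j \<le> mid s' e'}"
  have eq: "{pow a j | j. mid s e \<le> real_of_int j \<and> real_of_int j \<le> mid s' e'} = pow a ` ?J"
    by auto
  have "?J \<subseteq> {lo..hi}" using sub by auto
  hence fin: "finite ?J" using finite_subset by blast
  have ne: "?J \<noteq> {}" using w by auto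
  have "Min (pow a ` ?J) \<in> pow a ` ?J"
    using fin ne by (intro Min_in) auto
  moreover have "runP a (s, e) (s', e') = Min (pow a ` ?J)"
    unfolding runP_def by (rule arg_cong[where f=Min]) auto
  ultimately show ?thesis by auto
qed

theorem mainTheorem7:
  fixes a :: nat and n s3 e3 e2 e1 :: int
  assumes "a \<ge> 1"
    and "n = 2 ^ a - 1"
    and "1 \<le> s3" and "s3 \<le> e3" and "e3 < e2" and "e2 < e1" and "e1 \<le> n"
    and "runP a (s3, e3) (e3 + 1, e2) > runP a (e3 + 1, e2) (e2 + 1, e1)"
  shows "mid (e2 + 1) e1 - mid s3 e3 \<ge>
           real_of_int n / 2 powr (real_of_int (runP a (s3, e3) (e3 + 1, e2)) + 1)"
proof -
  obtain j0 where j0: "mid s3 e3 \<le> real_of_int j0" "real_of_int j0 \<le> mid (e3+1) e2"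
      "runP a (s3, e3) (e3 + 1, e2) = pow a j0"
    using runP_facts[of s3 e3 "e3+1" e2 s3 e2 e3 a] assms unfolding mid_def by auto
  obtain j1 where j1: "mid (e3+1) e2 \<le> real_of_int j1" "real_of_int j1 \<le> mid (e2+1) e1"
      "runP a (e3+1, e2) (e2 + 1, e1) = pow a j1"
    using runP_facts[of "e3+1" e2 "e2+1" e1 "e3+1" e1 e2 a] assms unfolding mid_def by auto
  have j0pos: "j0 \<ge> 1" "j0 \<le> e2" using j0 assms unfolding mid_def by auto
  have j1pos: "j1 \<ge> 1" using j1 assms unfolding mid_def by auto
  have le: "j0 \<le> j1" using j0 j1 by linarith
  define k where "k = nu2 j0"
  have lt: "nu2 j1 \<ge> k + 1" using j0 j1 assms(8) unfolding k_def pow_def by auto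
  have d1: "(2::int)^(k+1) dvd j1" using lt unfolding nu2_def by (rule multiplicity_dvd')
  have d0: "(2::int)^k dvd j0" unfolding k_def nu2_def by (rule multiplicity_dvd)
  have nd0: "\<not> (2::int)^(k+1) dvd j0"
  proof
    assume "(2::int)^(k+1) dvd j0"
    hence "multiplicity 2 j0 \<ge> k + 1" using j0pos by (intro multiplicity_geI) auto
    thus False unfolding k_def nu2_def by simp
  qed
  obtain m where m: "j0 = 2^k * m" using d0 by blast
  obtain t where t: "j1 = 2^(k+1) * t" using d1 by blast
  have "j1 \<noteq> j0" using d1 nd0 by auto
  hence "j0 < j1" using le by auto
  hence "2^k * m < 2^k * (2*t)" using m t by simp
  hence "m < 2*t" by (simp add: mult_less_cancel_left)
  moreover have "odd m" using nd0 m by auto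
  ultimately have "m + 1 \<le> 2 * t" by presburger
  hence "2^k * (m+1) \<le> 2^k * (2*t)" by (simp add: mult_left_mono)
  hence gap: "j1 - j0 \<ge> 2^k" using m t by (simp add: algebra_simps)
  have "(2::int)^k \<le> j0" using d0 j0pos by (simp add: zdvd_imp_le)
  hence "(2::int)^k < 2^a" using j0pos assms(2,7) assms(5,6) by linarith
  hence ka: "k < a" by (simp add: power_strict_increasing_iff)
  have p3: "real_of_int (runP a (s3, e3) (e3 + 1, e2)) + 1 = real (a - k)"
    using j0(3) ka unfolding pow_def k_def by simp
  have "real_of_int n / 2 powr (real (a - k)) = real_of_int n / 2^(a-k)"
    by (simp add: powr_realpow)
  also have "\<dots> \<le> 2^a / 2^(a-k)" using assms(2)
    by (intro divide_right_mono) auto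
  also have "\<dots> = 2^k" using ka by (simp add: power_diff)
  also have "\<dots> \<le> real_of_int j1 - real_of_int j0" using gap
    by (metis of_int_diff of_int_le_iff of_int_numeral of_int_power)
  also have "\<dots> \<le> mid (e2 + 1) e1 - mid s3 e3" using j0 j1 by linarith
  finally show ?thesis using p3 by simp
qed

end
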